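(* Consider $N$ agents whose states stack into $x\in\mathbb{R}^n$, each state coordinate belonging to exactly one agent. Let $A\in\mathbb{R}^{n\times n}$, $W\in\mathbb{R}^{n\times n}$ symmetric positive definite, $C=\mathrm{diag}(C_{11},\dots,C_{nn})$ diagonal positive definite (block-diagonal over agents). For each agent $i$ let $\Delta_{\ell_2}y_i>0$ be the $\ell_2$-sensitivity of its output map, take $\delta_i\in[10^{-5},10^{-1}]$, $\epsilon_i>0$, and set $\sigma_i=\frac{\Delta_{\ell_2}y_i}{2\epsilon_i}\big(K_{\delta_i}+\sqrt{K_{\delta_i}^2+2\epsilon_i}\big)$; let $V$ be the diagonal matrix whose $j$-th diagonal entry is $\sigma_i^2$ for the agent $i$ owning coordinate $j$. Let $\Sigma$ be the unique positive semidefinite solution of $\Sigma=A\Sigma A^T-A\Sigma C^T(C\Sigma C^T+V)^{-1}C\Sigma A^T+W$ and $\overline\Sigma=(C^TV^{-1}C+\Sigma^{-1})^{-1}$ (the MSE matrix of the a posteriori estimates). Let $B_l,B_u$ be real numbers and define, for each $i$, $$\eta_3:=\left(\frac{B_lC_u^2}{(\Delta_{\ell_2}y_i)^2\big(n-B_l\lambda_n^{-1}(W)\big)}\right)^{1/2},\qquad \eta_4:=\left(\frac{B_uC_l^2}{n(\Delta_{\ell_2}y_i)^2}\right)^{1/2},$$ assumed to be positive real numbers. If for all $i$ $$\frac18\left(\frac{1+\sqrt{36\eta_4+1}}{\eta_4}\right)^2\le\epsilon_i\le\frac1{\eta_3},$$ then $B_l\le\mathrm{tr}\,\overline\Sigma\le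 B_u$.
   Context: $\mathcal{Q}(y)=\frac{1}{\sqrt{2\pi}}\int_y^\infty e^{-z^2/2}dz$ and $K_\delta=\mathcal{Q}^{-1}(\delta)$. $\lambda_n(\cdot)$ is the smallest eigenvalue. With $V_{jj}=\sigma_j^2$ the noise variance of coordinate $j$, $l=\arg\min_j C_{jj}^2/\sigma_j^2$, $u=\arg\max_j C_{jj}^2/\sigma_j^2$, $C_l=C_{ll}$, $C_u=C_{uu}$. The $\ell_2$-sensitivity of agent $i$'s output $y_i(k)=C_ix_i(k)$ is $\sup\|C_ix_i-C_ix_i'\|_{\ell_2}$ over state trajectories with $\|x_i-x_i'\|_{\ell_2}\le b_i$ for a given adjacency parameter $b_i>0$. *)

theory Defs
  imports "HOL-Analysis.Analysis"
begin

definition Qfun :: "real \<Rightarrow> real" where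
  "Qfun y = (1 / sqrt (2 * pi)) * integral {y..} (\<lambda>z. exp (- (z\<^sup>2) / 2))"

definition Kfun :: "real \<Rightarrow> real" where
  "Kfun \<delta> = (THE y. Qfun y = \<delta>)"

definition sym_mat :: "real^'n^'n \<Rightarrow> bool" where
  "sym_mat M \<longleftrightarrow> transpose M = M"

definition pos_def :: "real^'n^'n \<Rightarrow> bool" where
  "pos_def M \<longleftrightarrow> sym_mat M \<and> (\<forall>x. x \<noteq> 0 \<longrightarrow> x \<bullet> (M *v x) > 0)"

definition pos_semidef :: "real^'n^'n \<Rightarrow> bool" where
  "pos_semidef M \<longleftrightarrow> sym_mat M \<and> (\<forall>x. x \<bullet> (M *v x) \<ge> 0)"

definition diag_mat :: "real^'n^'n \<Rightarrow> bool" where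
  "diag_mat M \<longleftrightarrow> (\<forall>i j. i \<noteq> j \<longrightarrow> M $ i $ j = 0)"

definition min_eig :: "real^'n^'n \<Rightarrow> real" where
  "min_eig M = Min {l. \<exists>v. v \<noteq> 0 \<and> M *v v = l *s v}"

text \<open>l2-sensitivity of the output y_i = C_i x_i of agent i (coordinates owner^-1 {i}),
  with adjacency parameter b: supremum of the l2 norm of C_i x_i - C_i x_i' over state
  trajectories of agent i with l2 distance at most b.\<close>
definition l2_sensitivity :: "real^'n^'n \<Rightarrow> ('n \<Rightarrow> 'm) \<Rightarrow> real \<Rightarrow> 'm \<Rightarrow> real" where
  "l2_sensitivity C owner b i =
     Sup {sqrt (\<Sum>k. \<Sum>j\<in>{j. owner j = i}. (C $ j $ j * (x k j - x' k j))\<^sup>2) | x x'.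
            summable (\<lambda>k. \<Sum>j\<in>{j. owner j = i}. (x k j - x' k j)\<^sup>2) \<and>
            sqrt (\<Sum>k. \<Sum>j\<in>{j. owner j = i}. (x k j - x' k j)\<^sup>2) \<le> b}"

end

theory Submission
  imports Defs
begin

lemma scalar_disc:
  fixes a b c :: real
  assumes "\<And>t. 0 \<le> a + 2*t*b + t\<^sup>2*c" and "0 \<le> c"
  shows "b\<^sup>2 \<le> a*c"
proof (cases "c = 0")
  case True
  show ?thesis
  proof (rule ccontr)
    assume "\<not> ?thesis"
    then have "b \<noteq> 0" using True by simp
    have "0 \<le> a + 2*(-(a+1)/(2*b))*b + (-(a+1)/(2*b))\<^sup>2*c" by (rule assms(1))
    also have "\<dots> = -1" using True \<open>b \<noteq> 0\<close> by (simp add: field_simps)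
    finally show False by simp
  qed
next
  case False
  then have cp: "c > 0" using assms(2) by simp
  have "0 \<le> a + 2*(-b/c)*b + (-b/c)\<^sup>2*c" by (rule assms(1))
  also have "\<dots> = a - b\<^sup>2/c" using cp by (simp add: field_simps power2_eq_square)
  finally have "b\<^sup>2/c \<le> a" by simp
  then show ?thesis using cp by (simp add: field_simps)
qed

lemma mv_scaleR: "(M::real^'n^'n) *v (t *\<^sub>R y) = t *\<^sub>R (M *v y)"
  by (metis scalar_mult_eq_scaleR vector_scalar_commute)

lemma dot_mv: "(x::real^'n) \<bullet> ((A::real^'n^'n) *v z) = (transpose A *v x) \<bullet> z"
  by (metis dot_lmul_matrix transpose_matrix_vector)

lemma sym_dot:
  assumes "transpose M = (M::real^'n^'n)"
  shows "x \<bullet> (M *v y) = y \<bullet> (M *v x)"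
  by (metis assms dot_mv inner_commute)

lemma psd_cs:
  fixes M :: "real^'n^'n"
  assumes sym: "transpose M = M" and psd: "\<And>z. 0 \<le> z \<bullet> (M *v z)"
  shows "(x \<bullet> (M *v y))\<^sup>2 \<le> (x \<bullet> (M *v x)) * (y \<bullet> (M *v y))"
proof (rule scalar_disc)
  fix t :: real
  have "0 \<le> (x + t *\<^sub>R y) \<bullet> (M *v (x + t *\<^sub>R y))" by (rule psd)
  also have "\<dots> = x \<bullet> (M *v x) + 2*t*(x \<bullet> (M *v y)) + t\<^sup>2*(y \<bullet> (M *v y))"
    using sym_dot[OF sym, of x y]
    by (simp add: matrix_vector_right_distrib mv_scaleR inner_add_left inner_add_right
        power2_eq_square algebra_simps)
  finally show "0 \<le> x \<bullet> (M *v x) + 2*t*(x \<bullet> (M *v y)) + t\<^sup>2*(y \<bullet> (M *v y))" .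
qed (rule psd)

lemma inv_props:
  assumes "invertible (A::real^'n^'n)"
  shows "A ** matrix_inv A = mat 1" "matrix_inv A ** A = mat 1"
  using someI_ex[OF assms[unfolded invertible_def]] unfolding matrix_inv_def by auto

lemma inv_unique:
  assumes "(A::real^'n^'n) ** B = mat 1"
  shows "matrix_inv A = B"
proof -
  have inv: "invertible A" using assms invertible_right_inverse by blast
  have "matrix_inv A = matrix_inv A ** (A ** B)" using assms by (simp add: matrix_mul_rid)
  also have "\<dots> = (matrix_inv A ** A) ** B" by (simp add: matrix_mul_assoc)
  also have "\<dots> = B" using inv_props(2)[OF inv] by (simp add: matrix_mul_lid)
  finally show ?thesis .
qed

lemma inv_mv:
  assumes "invertible (A::real^'n^'n)"
  shows "A *v (matrix_inv A *v x) = x" "matrix_inv A *v (A *v x) = x"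
  using inv_props[OF assms] by (simp_all add: matrix_vector_mul_assoc)

lemma pd_invertible:
  fixes M :: "real^'n^'n"
  assumes "\<And>x. x \<noteq> 0 \<Longrightarrow> x \<bullet> (M *v x) > 0"
  shows "invertible M"
proof -
  have "inj ((*v) M)"
  proof (rule injI)
    fix x y assume "M *v x = M *v y"
    then have "M *v (x - y) = 0" by (simp add: matrix_vector_right_distrib[symmetric] 
       matrix_vector_mult_diff_distrib)
    then show "x = y" using assms[of "x - y"] by fastforce
  qed
  then show ?thesis using matrix_left_invertible_injective invertible_left_inverse by blast
qed

lemma inv_sym:
  assumes "transpose M = (M::real^'n^'n)" "invertible M"
  shows "transpose (matrix_inv M) = matrix_inv M"
proof -
  have "M ** transpose (matrix_inv M) = mat 1"
    using inv_props(2)[OF assms(2)] assms(1)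
    by (metis matrix_transpose_mul transpose_mat)
  then show ?thesis using inv_unique by metis
qed

lemma axis_dot: "(x::real^'n) \<bullet> axis i 1 = x $ i"
  by (simp add: inner_axis)

lemma mv_axis: "((M::real^'n^'n) *v axis j 1) $ i = M $ i $ j"
  by (simp add: matrix_vector_mult_def axis_def if_distrib cong: if_cong)

lemma diag_q: "axis i 1 \<bullet> ((M::real^'n^'n) *v axis i 1) = M $ i $ i"
  by (metis axis_dot inner_commute mv_axis)

lemma comp_sq_le: "((x::real^'n) $ i)\<^sup>2 \<le> x \<bullet> x"
proof -
  have "\<bar>x $ i\<bar> \<le> norm x" by (rule component_le_norm_cart)
  then have "(x $ i)\<^sup>2 \<le> (norm x)\<^sup>2" by (metis abs_ge_zero power2_abs power_mono)
  then show ?thesis by (simp add: power2_norm_eq_inner)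
qed

lemma quad_le:
  fixes d t :: real
  assumes "d > 0" "d * t\<^sup>2 \<le> t"
  shows "t \<le> 1/d"
proof (cases "t \<le> 0")
  case True
  then show ?thesis using assms(1) by (meson divide_pos_pos order_trans less_imp_le zero_less_one)
next
  case False
  then have "d * t * t \<le> 1 * t" using assms(2) by (simp add: power2_eq_square mult.assoc)
  then have "d * t \<le> 1" using False by (meson mult_le_cancel_right not_le)
  then show ?thesis using assms(1) by (simp add: field_simps mult.commute)
qed

lemma inv_diag_upper:
  fixes M D P :: "real^'n^'n"
  assumes MDP: "M = D + P" and inv: "invertible M"
    and Ppsd: "\<And>z. 0 \<le> z \<bullet> (P *v z)"
    and Dlow: "\<And>y. d * (y $ i)\<^sup>2 \<le> y \<bullet> (D *v y)" and dpos: "d > 0"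
  shows "matrix_inv M $ i $ i \<le> 1/d"
proof -
  define y where "y = matrix_inv M *v axis i 1"
  have yi: "y $ i = matrix_inv M $ i $ i" unfolding y_def by (rule mv_axis)
  have My: "M *v y = axis i 1" unfolding y_def by (rule inv_mv(1)[OF inv])
  have "y \<bullet> (M *v y) = y $ i" using My by (simp add: axis_dot)
  moreover have "y \<bullet> (M *v y) = y \<bullet> (D *v y) + y \<bullet> (P *v y)"
    using MDP by (simp add: matrix_vector_mult_add_rdistrib inner_add_right)
  ultimately have "d * (y $ i)\<^sup>2 \<le> y $ i" using Dlow[of y] Ppsd[of y] by linarith
  then have "y $ i \<le> 1/d" using dpos quad_le by blast
  then show ?thesis using yi by simp
qed

lemma inv_diag_lower:
  fixes M :: "real^'n^'n"
  assumes sym: "transpose M = M" and inv: "invertible M"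
    and psd: "\<And>z. 0 \<le> z \<bullet> (M *v z)" and pos: "M $ i $ i > 0"
  shows "1 / M $ i $ i \<le> matrix_inv M $ i $ i"
proof -
  define y where "y = matrix_inv M *v axis i 1"
  have yi: "y $ i = matrix_inv M $ i $ i" unfolding y_def by (rule mv_axis)
  have My: "M *v y = axis i 1" unfolding y_def by (rule inv_mv(1)[OF inv])
  have q: "y \<bullet> (M *v y) = y $ i" using My by (simp add: axis_dot)
  have one: "y \<bullet> (M *v axis i 1) = 1"
    using sym_dot[OF sym, of y "axis i 1"] My by (simp add: axis_dot)
  have "(y \<bullet> (M *v axis i 1))\<^sup>2 \<le> (y \<bullet> (M *v y)) * (axis i 1 \<bullet> (M *v axis i 1))"
    by (rule psd_cs[OF sym psd])
  then have "1 \<le> y $ i * M $ i $ i" using one q diag_q[of i M] by simp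
  then show ?thesis using yi pos by (simp add: field_simps)
qed

lemma inv_diag_eig:
  fixes S :: "real^'n^'n"
  assumes inv: "invertible S" and low: "\<And>x. lam * (x \<bullet> x) \<le> x \<bullet> (S *v x)" and lp: "lam > 0"
  shows "matrix_inv S $ i $ i \<le> 1/lam"
proof -
  define y where "y = matrix_inv S *v axis i 1"
  have yi: "y $ i = matrix_inv S $ i $ i" unfolding y_def by (rule mv_axis)
  have My: "S *v y = axis i 1" unfolding y_def by (rule inv_mv(1)[OF inv])
  have q: "y \<bullet> (S *v y) = y $ i" using My by (simp add: axis_dot)
  have "lam * (y $ i)\<^sup>2 \<le> lam * (y \<bullet> y)" using comp_sq_le lp by simp
  then have "lam * (y $ i)\<^sup>2 \<le> y $ i" using low[of y] q by linarith
  then have "y $ i \<le> 1/lam" using lp quad_le by blast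
  then show ?thesis using yi by simp
qed

lemma mat_mv: "mat m *v (x::real^'n) = m *\<^sub>R x"
proof -
  have "(mat m *v x) $ i = m * x $ i" for i
  proof -
    have e: "(\<lambda>j. (if i = j then m else 0) * x $ j) = (\<lambda>j. if i = j then m * x $ j else 0)"
      by auto
    have "(mat m *v x) $ i = (\<Sum>j\<in>UNIV. (if i = j then m else 0) * x $ j)"
      unfolding matrix_vector_mult_def mat_def by simp
    also have "\<dots> = (\<Sum>j\<in>UNIV. (if i = j then m * x $ j else 0))" by (simp only: e)
    also have "\<dots> = m * x $ i" by (simp add: sum.delta)
    finally show ?thesis .
  qed
  then show ?thesis by (simp add: vec_eq_iff)
qed

lemma min_eig_prop:
  fixes W :: "real^'n^'n"
  assumes pd: "pos_def W"
  shows "min_eig W > 0 \<and> (\<forall>x. min_eig W * (x \<bullet> x) \<le> x \<bullet> (W *v x))"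
proof -
  have sym: "transpose W = W" using pd unfolding pos_def_def sym_mat_def by simp
  have pos: "\<And>x. x \<noteq> 0 \<Longrightarrow> x \<bullet> (W *v x) > 0" using pd unfolding pos_def_def by simp
  define f where "f x = x \<bullet> (W *v x)" for x :: "real^'n"
  have cont: "continuous_on (sphere 0 1) f" unfolding f_def
    by (intro continuous_intros matrix_vector_mult_linear_continuous_on[THEN continuous_on_compose2[where f="\<lambda>x. x"]]) auto
  obtain k :: 'n where True by simp
  have ne: "sphere (0::real^'n) 1 \<noteq> {}"
    using norm_axis_1[of k] by (metis dist_0_norm empty_iff mem_sphere)
  obtain v where v: "v \<in> sphere 0 1" and vmin: "\<And>y. y \<in> sphere 0 1 \<Longrightarrow> f v \<le> f y"
    using continuous_attains_inf[OF compact_sphere ne cont] by blast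
  define m where "m = f v"
  have nv: "norm v = 1" using v by simp
  have vv: "v \<bullet> v = 1" using nv by (simp add: power2_norm_eq_inner[symmetric])
  have vne: "v \<noteq> 0" using nv by auto
  have mpos: "m > 0" unfolding m_def f_def using pos[OF vne] .
  have low: "m * (x \<bullet> x) \<le> x \<bullet> (W *v x)" for x
  proof (cases "x = 0")
    case True then show ?thesis by simp
  next
    case False
    define u where "u = (1/norm x) *\<^sub>R x"
    have "u \<in> sphere 0 1" unfolding u_def using False by simp
    then have "m \<le> f u" using vmin m_def by simp
    also have "f u = (1/norm x)\<^sup>2 * (x \<bullet> (W *v x))"
      unfolding f_def u_def by (simp add: mv_scaleR power2_eq_square)
    finally have "m * (norm x)\<^sup>2 \<le> x \<bullet> (W *v x)" using False
      by (simp add: field_simps power2_eq_square)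
    then show ?thesis by (simp add: power2_norm_eq_inner)
  qed
  define B where "B = W - mat m"
  have Bmv: "B *v x = W *v x - m *\<^sub>R x" for x
    unfolding B_def by (simp add: matrix_vector_mult_diff_rdistrib mat_mv)
  have Bsym: "transpose B = B" unfolding B_def using sym by (simp add: transpose_mat transpose_def vec_eq_iff mat_def)
  have Bpsd: "0 \<le> z \<bullet> (B *v z)" for z using low[of z] by (simp add: Bmv inner_diff_right)
  have Bv: "v \<bullet> (B *v v) = 0" using vv by (simp add: Bmv inner_diff_right m_def f_def)
  have "(v \<bullet> (B *v w))\<^sup>2 \<le> 0" for w using psd_cs[OF Bsym Bpsd, of v w] Bv by simp
  then have "v \<bullet> (B *v w) = 0" for w by simp
  then have "(B *v v) \<bullet> (B *v v) = 0" using sym_dot[OF Bsym] by metis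
  then have "B *v v = 0" by simp
  then have eigv: "W *v v = m *s v" by (simp add: Bmv scalar_mult_eq_scaleR)
  define E where "E = {l. \<exists>v. v \<noteq> 0 \<and> W *v v = l *s v}"
  have mE: "m \<in> E" unfolding E_def using eigv vne by (simp add: exI[of _ v])
  have Elow: "m \<le> l" if "l \<in> E" for l
  proof -
    from that have "\<exists>w. w \<noteq> 0 \<and> W *v w = l *s w" unfolding E_def by simp
    then obtain w where w: "w \<noteq> 0" "W *v w = l *s w" by (elim exE conjE)
    have "w \<bullet> (W *v w) = l * (w \<bullet> w)" using w(2) unfolding scalar_mult_eq_scaleR by (simp only: inner_scaleR_right)
    then have "m * (w \<bullet> w) \<le> l * (w \<bullet> w)" using low[of w] by linarith
    moreover have "w \<bullet> w > 0" using w by simp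
    ultimately show ?thesis by (meson mult_le_cancel_right_pos)
  qed
  define ev where "ev l = (SOME w. w \<noteq> 0 \<and> W *v w = l *s w)" for l
  have ev: "ev l \<noteq> 0 \<and> W *v ev l = l *s ev l" if "l \<in> E" for l
  proof -
    from that have "\<exists>w. w \<noteq> 0 \<and> W *v w = l *s w" unfolding E_def by simp
    then obtain w where "w \<noteq> 0 \<and> W *v w = l *s w" by (elim exE)
    then show ?thesis unfolding ev_def by (rule someI)
  qed
  have orth: "ev l \<bullet> ev l' = 0" if "l \<in> E" "l' \<in> E" "l \<noteq> l'" for l l'
  proof -
    have "ev l \<bullet> (W *v ev l') = ev l' \<bullet> (W *v ev l)" by (rule sym_dot[OF sym])
    moreover have "ev l \<bullet> (W *v ev l') = l' * (ev l \<bullet> ev l')"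
      using ev[OF that(2)] unfolding scalar_mult_eq_scaleR by (simp only: inner_scaleR_right)
    moreover have "ev l' \<bullet> (W *v ev l) = l * (ev l \<bullet> ev l')"
      using ev[OF that(1)] unfolding scalar_mult_eq_scaleR by (simp only: inner_scaleR_right inner_commute)
    ultimately have "l' * (ev l \<bullet> ev l') = l * (ev l \<bullet> ev l')" by simp
    then show ?thesis using that(3) by simp
  qed
  have injev: "inj_on ev E"
  proof (rule inj_onI)
    fix l l' assume "l \<in> E" "l' \<in> E" "ev l = ev l'"
    show "l = l'"
    proof (rule ccontr)
      assume "l \<noteq> l'"
      then have "ev l \<bullet> ev l = 0" using orth[of l l'] \<open>l \<in> E\<close> \<open>l' \<in> E\<close> \<open>ev l = ev l'\<close> by simp
      then show False using ev[OF \<open>l \<in> E\<close>] by simp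
    qed
  qed
  have "independent (ev ` E)"
  proof (rule pairwise_orthogonal_independent)
    show "pairwise orthogonal (ev ` E)"
      unfolding pairwise_def orthogonal_def using orth by blast
    show "0 \<notin> ev ` E" using ev by (metis imageE)
  qed
  then have "finite (ev ` E)" by (rule eucl.finiteI_independent)
  then have finE: "finite E" using injev finite_imageD by blast
  have "min_eig W = m" unfolding min_eig_def E_def[symmetric]
    by (rule Min_eqI[OF finE Elow mE])
  then show ?thesis using mpos low by simp
qed

definition gq :: "real \<Rightarrow> real" where "gq z = exp (- (z\<^sup>2) / 2)"

lemma Qfun_gq: "Qfun y = (1 / sqrt (2 * pi)) * integral {y..} gq"
  unfolding Qfun_def gq_def by simp

lemma gq_pos: "gq z > 0" unfolding gq_def by simp

lemma gq_cont: "continuous_on S gq" unfolding gq_def by (intro continuous_intros) auto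

lemma atLeast_leb: "{a::real..} \<in> sets lebesgue" by (intro sets_completionI_sets) simp

lemma gq_int: "gq integrable_on {a..}"
proof (rule measurable_bounded_by_integrable_imp_integrable)
  show "gq \<in> borel_measurable (lebesgue_on {a..})"
    by (rule continuous_imp_measurable_on_sets_lebesgue[OF gq_cont atLeast_leb])
  show "{a..} \<in> sets lebesgue" by (rule atLeast_leb)
  show "(\<lambda>x. exp (1/2) * exp (- 1 * x)) integrable_on {a..}"
    using integrable_on_cmult_left[OF integrable_on_exp_minus_to_infinity[of 1 a], of "exp (1/2)"]
    by simp
  fix x :: real assume "x \<in> {a..}"
  have "- (x\<^sup>2) / 2 \<le> 1/2 + - 1 * x"
    using zero_le_power2[of "x - 1"] by (simp add: power2_eq_square algebra_simps)
  then have b: "exp (- (x\<^sup>2) / 2) \<le> exp (1/2 + - 1 * x)" by (subst exp_le_cancel_iff)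
  have e: "exp (1/2 + - 1 * x) = exp (1/2) * exp (- 1 * x)" by (rule exp_add)
  have n: "norm (gq x) = exp (- (x\<^sup>2) / 2)" unfolding gq_def by simp
  show "norm (gq x) \<le> exp (1/2) * exp (- 1 * x)"
    by (subst n, subst e[symmetric]) (rule b)
qed

lemma gq_int_iv: "gq integrable_on {a..b}"
  by (rule integrable_continuous_interval[OF gq_cont])

lemma gq_split:
  assumes "a \<le> b"
  shows "integral {a..} gq = integral {a..b} gq + integral {b..} gq"
proof -
  have "(gq has_integral (integral {a..b} gq + integral {b..} gq)) ({a..b} \<union> {b..})"
    by (rule has_integral_Un[OF integrable_integral[OF gq_int_iv] integrable_integral[OF gq_int]])
      (rule negligible_subset[OF negligible_sing[of b]], auto)
  moreover have "{a..b} \<union> {b..} = {a..}" using assms by auto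
  ultimately show ?thesis by (metis integral_unique)
qed

lemma gq_iv_pos:
  assumes "a < b"
  shows "integral {a..b} gq > 0"
proof -
  define k where "k = exp (- (a\<^sup>2 + b\<^sup>2) / 2)"
  have "integral {a..b} (\<lambda>x. k) \<le> integral {a..b} gq"
  proof (rule integral_le)
    show "(\<lambda>x. k) integrable_on {a..b}" by (rule integrable_continuous_interval) (rule continuous_on_const)
    show "gq integrable_on {a..b}" by (rule gq_int_iv)
    fix x assume x: "x \<in> {a..b}"
    have "x\<^sup>2 \<le> a\<^sup>2 + b\<^sup>2"
    proof (cases "x \<ge> 0")
      case True
      then have "x\<^sup>2 \<le> b\<^sup>2" using x by (simp add: power_mono)
      then show ?thesis by (simp add: add_increasing)
    next
      case False
      then have "(-x)\<^sup>2 \<le> (-a)\<^sup>2" using x by (intro power_mono) auto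
      then show ?thesis by (simp add: add_increasing2)
    qed
    then show "k \<le> gq x" unfolding k_def gq_def by simp
  qed
  moreover have "integral {a..b} (\<lambda>x. k) = (b - a) * k" using assms by simp
  moreover have "(b - a) * k > 0" using assms unfolding k_def by simp
  ultimately show ?thesis by linarith
qed

lemma gq_nonneg_int: "integral {a..} gq \<ge> 0"
  by (rule integral_nonneg[OF gq_int]) (simp add: less_imp_le[OF gq_pos])

lemma Q_strict: assumes "y < y'" shows "Qfun y' < Qfun y"
proof -
  have "integral {y..} gq = integral {y..y'} gq + integral {y'..} gq" using assms by (simp add: gq_split)
  then have "integral {y'..} gq < integral {y..} gq" using gq_iv_pos[OF assms] by linarith
  then show ?thesis unfolding Qfun_gq by (simp add: divide_strict_right_mono)
qed

lemma Q_cont: "continuous_on {a..b} Qfun"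
proof -
  have "continuous_on {a..b} (\<lambda>y. (1 / sqrt (2 * pi)) * (integral {a..} gq - integral {a..y} gq))"
    by (intro continuous_intros indefinite_integral_continuous_1 gq_int_iv)
  moreover have "Qfun y = (1 / sqrt (2 * pi)) * (integral {a..} gq - integral {a..y} gq)" if "y \<in> {a..b}" for y
    using gq_split[of a y] that unfolding Qfun_gq by simp
  ultimately show ?thesis using continuous_on_cong by (metis (no_types, lifting))
qed

lemma sqrt2pi_bounds: "12/5 < sqrt (2 * pi)" "sqrt (2 * pi) < 13/5"
proof -
  have "(12/5)\<^sup>2 < 2 * pi" using pi_gt3 by (simp add: power2_eq_square)
  then show "12/5 < sqrt (2 * pi)" by (rule real_less_rsqrt)
  have "2 * pi < (13/5)\<^sup>2" using pi_approx(2) by (simp add: power2_eq_square)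
  then have "sqrt (2 * pi) < sqrt ((13/5)\<^sup>2)" by (rule real_sqrt_less_mono)
  then show "sqrt (2 * pi) < 13/5" by simp
qed

lemma Q_at_1: "Qfun 1 > 1/10"
proof -
  define h where "h x = exp (1 - 3 * x / 2)" for x :: real
  have der: "((\<lambda>x. - (2/3) * exp (1 - 3 * x / 2)) has_vector_derivative h x) (at x within {1..2})" for x
    unfolding h_def
    by (auto intro!: derivative_eq_intros simp flip: has_real_derivative_iff_has_vector_derivative)
  have "(h has_integral ((- (2/3) * exp (1 - 3 * 2 / 2)) - (- (2/3) * exp (1 - 3 * 1 / 2)))) {1..2}"
    apply (rule fundamental_theorem_of_calculus)
     apply simp
    using der by blast
  then have hint: "(h has_integral (2/3) * (exp (-1/2) - exp (-2))) {1..2}"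
    by (simp add: algebra_simps)
  have "integral {1..2} h \<le> integral {1..2} gq"
  proof (rule integral_le)
    show "h integrable_on {1..2}" using hint by blast
    show "gq integrable_on {1..2}" by (rule gq_int_iv)
    fix x :: real assume x: "x \<in> {1..2}"
    have "(x - 1) * (x - 2) \<le> 0" using x by (auto simp: mult_nonneg_nonpos)
    then have "1 - 3 * x / 2 \<le> - (x\<^sup>2) / 2" by (simp add: power2_eq_square algebra_simps)
    then show "h x \<le> gq x" unfolding h_def gq_def by simp
  qed
  then have i12: "(2/3) * (exp (-1/2) - exp (-2)) \<le> integral {1..2} gq"
    using integral_unique[OF hint] by simp
  have "integral {1..} gq = integral {1..2} gq + integral {2..} gq" by (simp add: gq_split)
  then have i1: "(2/3) * (exp (-1/2) - exp (-2)) \<le> integral {1..} gq"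
    using i12 gq_nonneg_int[of 2] by linarith
  have e1: "7/8 \<le> exp (-1/8::real)" using exp_ge_add_one_self[of "-1/8"] by simp
  have "exp (-1/2::real) = exp (-1/8) ^ 4" using exp_of_nat_mult[of 4 "-1/8::real"] by simp
  also have "\<dots> \<ge> (7/8) ^ 4" using e1 by (intro power_mono) auto
  finally have e2: "(7/8)^4 \<le> exp (-1/2::real)" .
  have "5/2 \<le> exp (1::real)" using exp_lower_Taylor_quadratic[of 1] by simp
  then have "(5/2)^2 \<le> exp (1::real) ^ 2" by (intro power_mono) auto
  also have "exp (1::real) ^ 2 = exp 2" using exp_of_nat_mult[of 2 "1::real"] by simp
  finally have "(5/2)^2 \<le> exp (2::real)" .
  then have e3: "exp (-2::real) \<le> 4/25"
    by (simp add: exp_minus field_simps)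
  have "(2/3) * ((7/8)^4 - 4/25) \<le> integral {1..} gq" using i1 e2 e3 by simp
  moreover have "(13/5) / 10 < (2/3) * ((7/8)^4 - 4/25 :: real)" by (simp add: power_divide)
  ultimately have "sqrt (2*pi) / 10 < integral {1..} gq" using sqrt2pi_bounds(2) by simp
  then show ?thesis unfolding Qfun_gq using sqrt2pi_bounds(1)
    by (simp add: field_simps)
qed

lemma Q_at_45: "Qfun (9/2) < 1/10^5"
proof -
  define a :: real where "a = 9/2"
  have "integral {a..} gq \<le> integral {a..} (\<lambda>x. exp (a\<^sup>2/2) * exp (- a * x))"
  proof (rule integral_le)
    show "gq integrable_on {a..}" by (rule gq_int)
    show "(\<lambda>x. exp (a\<^sup>2/2) * exp (- a * x)) integrable_on {a..}"
      using integrable_on_cmult_left[OF integrable_on_exp_minus_to_infinity[of a a], of "exp (a\<^sup>2/2)"]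
      unfolding a_def by simp
    fix x assume "x \<in> {a..}"
    have "- (x\<^sup>2) / 2 \<le> a\<^sup>2/2 + - a * x"
      using zero_le_power2[of "x - a"] by (simp add: power2_eq_square algebra_simps)
    then have b: "exp (- (x\<^sup>2) / 2) \<le> exp (a\<^sup>2/2 + - a * x)" by (subst exp_le_cancel_iff)
    have e: "exp (a\<^sup>2/2 + - a * x) = exp (a\<^sup>2/2) * exp (- a * x)" by (rule exp_add)
    show "gq x \<le> exp (a\<^sup>2/2) * exp (- a * x)" unfolding gq_def
      by (subst e[symmetric]) (rule b)
  qed
  also have "\<dots> = exp (a\<^sup>2/2) * integral {a..} (\<lambda>x. exp (- a * x))"
    by (rule integral_mult_right)
  also have "integral {a..} (\<lambda>x. exp (- a * x)) = exp (- a * a) / a"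
    by (rule integral_unique[OF has_integral_exp_minus_to_infinity]) (simp add: a_def)
  also have "exp (a\<^sup>2/2) * (exp (- a * a) / a) = exp (- (81/8)) * (2/9)"
    unfolding a_def by (simp add: exp_add[symmetric] power2_eq_square)
  finally have i: "integral {9/2..} gq \<le> exp (- (81/8)) * (2/9)" unfolding a_def .
  have "(163/100::real) \<le> 1 + (81/160) + (81/160)\<^sup>2/2" by (simp add: power2_eq_square)
  also have "\<dots> \<le> exp (81/160::real)" by (rule exp_lower_Taylor_quadratic) simp
  finally have "(163/100)^20 \<le> exp (81/160::real) ^ 20" by (intro power_mono) auto
  also have "\<dots> = exp (81/8)" using exp_of_nat_mult[of 20 "81/160::real"] by simp
  finally have "9260 \<le> exp (81/8::real)"
    using order_trans[of "9260::real" "(163/100)^20"] by (simp add: power_divide)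
  then have "exp (- (81/8::real)) \<le> 1/9260" by (simp add: exp_minus field_simps)
  then have "integral {9/2..} gq \<le> (1/9260) * (2/9)" using i by simp
  moreover have "(1/9260) * (2/9) < (12/5) / (10::real)^5" by simp
  ultimately have "integral {9/2..} gq < sqrt (2*pi) / 10^5" using sqrt2pi_bounds(1)
    by (smt (verit) divide_strict_right_mono zero_less_power)
  then show ?thesis unfolding Qfun_gq using sqrt2pi_bounds(1)
    by (simp add: field_simps)
qed

lemma Kfun_bounds:
  assumes "10 powi (-5) \<le> \<delta> \<and> \<delta> \<le> 10 powi (-1)"
  shows "1 \<le> Kfun \<delta> \<and> Kfun \<delta> \<le> 9/2"
proof -
  have d: "1/10^5 \<le> \<delta>" "\<delta> \<le> 1/10" using assms by (simp_all add: power_int_minus)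
  have "Qfun (9/2) \<le> \<delta>" using Q_at_45 d(1) by linarith
  moreover have "\<delta> \<le> Qfun 1" using Q_at_1 d(2) by linarith
  ultimately have "\<exists>x\<ge>1. x \<le> 9/2 \<and> Qfun x = \<delta>"
    by (intro IVT2'[OF _ _ _ Q_cont]) auto
  then obtain x where x: "1 \<le> x" "x \<le> 9/2" "Qfun x = \<delta>" by blast
  have "Kfun \<delta> = x" unfolding Kfun_def
  proof (rule the_equality)
    show "Qfun x = \<delta>" by (rule x(3))
    fix y assume "Qfun y = \<delta>"
    then show "y = x" using Q_strict[of x y] Q_strict[of y x] x(3) by (metis less_irrefl linorder_neqE_linordered_idom)
  qed
  then show ?thesis using x by simp
qed

lemma SL1:
  fixes \<eta> K \<epsilon> :: real
  assumes eta: "\<eta> > 0" and K: "K \<le> 9/2" and ep: "\<epsilon> > 0"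
    and lb: "1/8 * ((1 + sqrt (36 * \<eta> + 1)) / \<eta>)\<^sup>2 \<le> \<epsilon>"
  shows "K + sqrt (K\<^sup>2 + 2 * \<epsilon>) \<le> 2 * \<epsilon> * \<eta>"
proof -
  define s where "s = sqrt (36 * \<eta> + 1)"
  have s1: "s \<ge> 1" unfolding s_def using eta by simp
  have ss: "s\<^sup>2 = 36 * \<eta> + 1" unfolding s_def using eta by simp
  have "(1 + s)\<^sup>2 \<ge> 4 + 36 * \<eta>" using s1 ss by (simp add: power2_eq_square algebra_simps)
  then have "(4 + 36 * \<eta>) / \<eta>\<^sup>2 \<le> (1 + s)\<^sup>2 / \<eta>\<^sup>2"
    by (rule divide_right_mono) simp
  also have "\<dots> = ((1 + s) / \<eta>)\<^sup>2" by (simp add: power_divide)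
  finally have "1/8 * ((4 + 36 * \<eta>) / \<eta>\<^sup>2) \<le> \<epsilon>" using lb unfolding s_def[symmetric] by linarith
  then have key: "1 + 9 * \<eta> \<le> 2 * \<epsilon> * \<eta>\<^sup>2" using eta by (simp add: field_simps)
  have nn: "0 \<le> 2 * \<epsilon> * \<eta> - K"
  proof -
    have "(1 + 9 * \<eta>) / \<eta> \<le> 2 * \<epsilon> * \<eta>" using key eta by (simp add: field_simps power2_eq_square)
    moreover have "(1 + 9 * \<eta>) / \<eta> = 1/\<eta> + 9" using eta by (simp add: field_simps)
    moreover have "1/\<eta> > 0" using eta by simp
    ultimately show ?thesis using K by linarith
  qed
  have "(2 * \<epsilon> * \<eta> - K)\<^sup>2 - (K\<^sup>2 + 2 * \<epsilon>) = 2 * \<epsilon> * (2 * \<epsilon> * \<eta>\<^sup>2 - 2 * \<eta> * K - 1)"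
    by (simp add: power2_eq_square algebra_simps)
  also have "\<dots> \<ge> 2 * \<epsilon> * (\<eta> * (9 - 2 * K))"
  proof (rule mult_left_mono)
    show "\<eta> * (9 - 2 * K) \<le> 2 * \<epsilon> * \<eta>\<^sup>2 - 2 * \<eta> * K - 1" using key by (simp add: algebra_simps)
  qed (use ep in simp)
  also have "2 * \<epsilon> * (\<eta> * (9 - 2 * K)) \<ge> 0" using ep eta K by simp
  finally have "K\<^sup>2 + 2 * \<epsilon> \<le> (2 * \<epsilon> * \<eta> - K)\<^sup>2" by simp
  then have "sqrt (K\<^sup>2 + 2 * \<epsilon>) \<le> 2 * \<epsilon> * \<eta> - K" using nn by (rule_tac real_le_lsqrt) auto
  then show ?thesis by simp
qed

lemma SL2:
  fixes K \<epsilon> :: real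
  assumes "K \<ge> 1" "\<epsilon> > 0"
  shows "K + sqrt (K\<^sup>2 + 2 * \<epsilon>) \<ge> 2"
proof -
  have "K \<le> sqrt (K\<^sup>2 + 2 * \<epsilon>)" using assms by (intro real_le_rsqrt) simp
  then show ?thesis using assms by simp
qed

lemma SL0:
  fixes K \<epsilon> :: real
  assumes "\<epsilon> > 0"
  shows "K + sqrt (K\<^sup>2 + 2 * \<epsilon>) > 0"
proof -
  have "\<bar>K\<bar> < sqrt (K\<^sup>2 + 2 * \<epsilon>)" using assms by (intro real_less_rsqrt) simp
  then show ?thesis by linarith
qed

definition dg :: "('n \<Rightarrow> real) \<Rightarrow> real^'n^'n" where
  "dg f = (\<chi> i j. if i = j then f i else 0)"

lemma dg_mv: "dg f *v x = (\<chi> i. f i * x $ i)"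
proof -
  have "(dg f *v x) $ i = f i * x $ i" for i
  proof -
    have e: "(\<lambda>j. (if i = j then f i else 0) * x $ j) = (\<lambda>j. if i = j then f i * x $ j else 0)"
      by auto
    have "(dg f *v x) $ i = (\<Sum>j\<in>UNIV. (if i = j then f i else 0) * x $ j)"
      unfolding matrix_vector_mult_def dg_def by simp
    also have "\<dots> = (\<Sum>j\<in>UNIV. (if i = j then f i * x $ j else 0))" by (simp only: e)
    also have "\<dots> = f i * x $ i" by (simp add: sum.delta)
    finally show ?thesis .
  qed
  then show ?thesis by (simp add: vec_eq_iff)
qed

lemma dg_mult: "dg f ** dg g = dg (\<lambda>i. f i * g i)"
proof -
  have "(dg f ** dg g) $ i $ k = dg (\<lambda>i. f i * g i) $ i $ k" for i k
  proof -
    have e: "(\<lambda>j. (if i = j then f i else 0) * (if j = k then g j else 0)) =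
             (\<lambda>j. if i = j then (if i = k then f i * g i else 0) else 0)"
      by auto
    have "(dg f ** dg g) $ i $ k = (\<Sum>j\<in>UNIV. (if i = j then f i else 0) * (if j = k then g j else 0))"
      unfolding matrix_matrix_mult_def dg_def by simp
    also have "\<dots> = (\<Sum>j\<in>UNIV. if i = j then (if i = k then f i * g i else 0) else 0)" by (simp only: e)
    also have "\<dots> = dg (\<lambda>i. f i * g i) $ i $ k" by (simp add: sum.delta dg_def)
    finally show ?thesis .
  qed
  then show ?thesis by (simp add: vec_eq_iff)
qed

lemma dg_transpose: "transpose (dg f) = dg f"
  by (simp add: transpose_def dg_def vec_eq_iff)

lemma dg_one: "dg (\<lambda>_. 1) = mat 1"
  by (simp add: mat_def dg_def vec_eq_iff)

lemma dg_q: "x \<bullet> (dg f *v x) = (\<Sum>i\<in>UNIV. f i * (x $ i)\<^sup>2)"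
  by (simp add: dg_mv inner_vec_def power2_eq_square mult.commute mult.left_commute)

lemma tadd: "transpose (A + B) = transpose A + (transpose B :: real^'n^'n)"
  by (simp add: transpose_def vec_eq_iff)

lemma pos_weighted_sum:
  fixes x :: "real^'n"
  assumes "\<And>i. f i > 0" "x \<noteq> 0"
  shows "(\<Sum>i\<in>UNIV. f i * (x $ i)\<^sup>2) > 0"
proof -
  obtain k where "x $ k \<noteq> 0" using assms(2) by (metis vec_eq_iff zero_index)
  then have "f k * (x $ k)\<^sup>2 > 0" using assms(1)[of k] by simp
  then show ?thesis
    by (intro sum_pos2[of UNIV k]) (auto intro!: mult_nonneg_nonneg less_imp_le[OF assms(1)])
qed

lemma single_le_weighted_sum:
  fixes x :: "real^'n"
  assumes "\<And>i. f i \<ge> 0"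
  shows "f k * (x $ k)\<^sup>2 \<le> (\<Sum>i\<in>UNIV. f i * (x $ i)\<^sup>2)"
  by (rule member_le_sum) (auto intro!: mult_nonneg_nonneg assms)

theorem theorem8:
  fixes A W C V \<Sigma> :: "real^'n^'n"
    and owner :: "'n \<Rightarrow> 'm::finite"
    and b \<Delta> \<delta> \<epsilon> \<sigma> :: "'m \<Rightarrow> real"
    and B_l B_u :: real
    and l u :: 'n
  assumes owner_surj: "surj owner"
    and W_pd: "pos_def W"
    and C_diag: "diag_mat C" and C_pd: "pos_def C"
    and b_pos: "\<And>i. b i > 0"
    and \<Delta>_def: "\<And>i. \<Delta> i = l2_sensitivity C owner (b i) i"
    and \<Delta>_pos: "\<And>i. \<Delta> i > 0"
    and \<delta>_range: "\<And>i. 10 powi (-5) \<le> \<delta> i \<and> \<delta> i \<le> 10 powi (-1)"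
    and \<epsilon>_pos: "\<And>i. \<epsilon> i > 0"
    and \<sigma>_def: "\<And>i. \<sigma> i = \<Delta> i / (2 * \<epsilon> i) * (Kfun (\<delta> i) + sqrt ((Kfun (\<delta> i))\<^sup>2 + 2 * \<epsilon> i))"
    and V_def: "V = (\<chi> j k. if j = k then (\<sigma> (owner j))\<^sup>2 else 0)"
    and \<Sigma>_psd: "pos_semidef \<Sigma>"
    and \<Sigma>_riccati: "\<Sigma> = A ** \<Sigma> ** transpose A
        - A ** \<Sigma> ** transpose C ** matrix_inv (C ** \<Sigma> ** transpose C + V) ** C ** \<Sigma> ** transpose A + W"
    and \<Sigma>_unique: "\<And>S. pos_semidef S \<Longrightarrow> S = A ** S ** transpose A
        - A ** S ** transpose C ** matrix_inv (C ** S ** transpose C + V) ** C ** S ** transpose A + W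
        \<Longrightarrow> S = \<Sigma>"
    and l_argmin: "\<And>j. (C $ l $ l)\<^sup>2 / (V $ l $ l) \<le> (C $ j $ j)\<^sup>2 / (V $ j $ j)"
    and u_argmax: "\<And>j. (C $ j $ j)\<^sup>2 / (V $ j $ j) \<le> (C $ u $ u)\<^sup>2 / (V $ u $ u)"
    and \<eta>3_pos: "\<And>i. sqrt (B_l * (C $ u $ u)\<^sup>2 /
                  ((\<Delta> i)\<^sup>2 * (real CARD('n) - B_l / min_eig W))) > 0"
    and \<eta>4_pos: "\<And>i. sqrt (B_u * (C $ l $ l)\<^sup>2 / (real CARD('n) * (\<Delta> i)\<^sup>2)) > 0"
    and \<epsilon>_bounds: "\<And>i.
        let \<eta>3 = sqrt (B_l * (C $ u $ u)\<^sup>2 / ((\<Delta> i)\<^sup>2 * (real CARD('n) - B_l / min_eig W)));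
            \<eta>4 = sqrt (B_u * (C $ l $ l)\<^sup>2 / (real CARD('n) * (\<Delta> i)\<^sup>2))
        in 1/8 * ((1 + sqrt (36 * \<eta>4 + 1)) / \<eta>4)\<^sup>2 \<le> \<epsilon> i \<and> \<epsilon> i \<le> 1 / \<eta>3"
  shows "B_l \<le> trace (matrix_inv (transpose C ** matrix_inv V ** C + matrix_inv \<Sigma>))
       \<and> trace (matrix_inv (transpose C ** matrix_inv V ** C + matrix_inv \<Sigma>)) \<le> B_u"
proof -
  let ?n = "real CARD('n)"
  have npos: "?n > 0" by simp
  define c where "c j = C $ j $ j" for j
  define v where "v j = (\<sigma> (owner j))\<^sup>2" for j
  have Csym: "transpose C = C" using C_pd unfolding pos_def_def sym_mat_def by simp
  have Cdg: "C = dg c" unfolding dg_def c_def using C_diag unfolding diag_mat_def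
    by (simp add: vec_eq_iff)
  have cpos: "c j > 0" for j
  proof -
    have "axis j (1::real) \<noteq> 0" by (simp add: axis_eq_0_iff)
    then have "axis j 1 \<bullet> (C *v axis j 1) > 0" using C_pd unfolding pos_def_def by simp
    then show ?thesis unfolding c_def by (simp add: diag_q)
  qed
  have Kb: "1 \<le> Kfun (\<delta> i) \<and> Kfun (\<delta> i) \<le> 9/2" for i by (rule Kfun_bounds[OF \<delta>_range])
  have \<sigma>pos: "\<sigma> i > 0" for i
  proof -
    have "Kfun (\<delta> i) + sqrt ((Kfun (\<delta> i))\<^sup>2 + 2 * \<epsilon> i) > 0" by (rule SL0[OF \<epsilon>_pos])
    then show ?thesis unfolding \<sigma>_def using \<Delta>_pos[of i] \<epsilon>_pos[of i] by simp
  qed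
  have vpos: "v j > 0" for j unfolding v_def using \<sigma>pos[of "owner j"] by simp
  have Vdg: "V = dg v" unfolding V_def dg_def v_def by simp
  have Vjj: "V $ j $ j = v j" for j unfolding Vdg dg_def by simp
  have Vinv: "matrix_inv V = dg (\<lambda>j. 1 / v j)"
  proof (rule inv_unique)
    have "(\<lambda>i. v i * (1 / v i)) = (\<lambda>_. 1)" using vpos by (simp add: fun_eq_iff less_imp_neq[symmetric])
    then show "V ** dg (\<lambda>j. 1 / v j) = mat 1" unfolding Vdg dg_mult by (simp add: dg_one)
  qed
  define d where "d j = (c j)\<^sup>2 / v j" for j
  have dpos: "d j > 0" for j unfolding d_def using cpos[of j] vpos[of j] by simp
  have d_eq: "d j = (C $ j $ j)\<^sup>2 / (V $ j $ j)" for j unfolding d_def c_def Vjj ..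
  define D where "D = transpose C ** matrix_inv V ** C"
  have Ddg: "D = dg d"
  proof -
    have "(\<lambda>i. c i * (1 / v i) * c i) = d" unfolding d_def by (simp add: fun_eq_iff power2_eq_square)
    then show ?thesis unfolding D_def Csym Vinv by (simp add: Cdg dg_mult)
  qed
  have Dq: "y \<bullet> (D *v y) = (\<Sum>i\<in>UNIV. d i * (y $ i)\<^sup>2)" for y unfolding Ddg by (rule dg_q)
  have \<Sigma>sym: "transpose \<Sigma> = \<Sigma>" using \<Sigma>_psd unfolding pos_semidef_def sym_mat_def by simp
  have \<Sigma>psd: "0 \<le> z \<bullet> (\<Sigma> *v z)" for z using \<Sigma>_psd unfolding pos_semidef_def by simp
  have Wsym: "transpose W = W" using W_pd unfolding pos_def_def sym_mat_def by simp
  have Wpos: "z \<noteq> 0 \<Longrightarrow> 0 < z \<bullet> (W *v z)" for z using W_pd unfolding pos_def_def by simp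
  define G where "G = C ** \<Sigma> ** transpose C + V"
  have Vq: "x \<bullet> (V *v x) = (\<Sum>i\<in>UNIV. v i * (x $ i)\<^sup>2)" for x unfolding Vdg by (rule dg_q)
  have Vqnn: "0 \<le> x \<bullet> (V *v x)" for x unfolding Vq by (rule sum_nonneg) (simp add: less_imp_le[OF vpos])
  have Gq: "x \<bullet> (G *v x) = (transpose C *v x) \<bullet> (\<Sigma> *v (transpose C *v x)) + x \<bullet> (V *v x)" for x
  proof -
    have "G *v x = C *v (\<Sigma> *v (transpose C *v x)) + V *v x"
      unfolding G_def by (simp only: matrix_vector_mult_add_rdistrib matrix_vector_mul_assoc[symmetric])
    then show ?thesis by (simp only: inner_add_right dot_mv)
  qed
  have Gpd: "0 < x \<bullet> (G *v x)" if "x \<noteq> 0" for x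
    using Gq[of x] \<Sigma>psd[of "transpose C *v x"] pos_weighted_sum[where f=v, OF vpos that] Vq[of x] by linarith
  have Ginv: "invertible G" by (rule pd_invertible[OF Gpd])
  have SW: "x \<bullet> (W *v x) \<le> x \<bullet> (\<Sigma> *v x)" for x
  proof -
    define w where "w = transpose A *v x"
    define u where "u = matrix_inv G *v (C *v (\<Sigma> *v w))"
    define s where "s = w \<bullet> (\<Sigma> *v (transpose C *v u))"
    define R where "R = A ** \<Sigma> ** transpose A - A ** \<Sigma> ** transpose C ** matrix_inv G ** C ** \<Sigma> ** transpose A + W"
    have eq: "\<Sigma> = R" unfolding R_def G_def by (rule \<Sigma>_riccati)
    have "x \<bullet> (\<Sigma> *v x) = x \<bullet> (R *v x)" by (simp only: eq[symmetric])
    also have "\<dots> = x \<bullet> (A *v (\<Sigma> *v (transpose A *v x)))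
        - x \<bullet> (A *v (\<Sigma> *v (transpose C *v (matrix_inv G *v (C *v (\<Sigma> *v (transpose A *v x)))))))
        + x \<bullet> (W *v x)"
      unfolding R_def
      by (simp only: matrix_vector_mult_add_rdistrib matrix_vector_mult_diff_rdistrib
          matrix_vector_mul_assoc[symmetric] inner_add_right inner_diff_right)
    also have "\<dots> = w \<bullet> (\<Sigma> *v w) - s + x \<bullet> (W *v x)"
      unfolding s_def u_def w_def by (simp only: dot_mv)
    finally have ric: "x \<bullet> (\<Sigma> *v x) = w \<bullet> (\<Sigma> *v w) - s + x \<bullet> (W *v x)" .
    have Gu: "G *v u = C *v (\<Sigma> *v w)" unfolding u_def by (rule inv_mv(1)[OF Ginv])
    have "u \<bullet> (G *v u) = (transpose C *v u) \<bullet> (\<Sigma> *v w)" unfolding Gu by (rule dot_mv)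
    also have "\<dots> = s" unfolding s_def using sym_dot[OF \<Sigma>sym, of w "transpose C *v u"] by simp
    finally have s_eq: "s = u \<bullet> (G *v u)" by simp
    have s_nn: "0 \<le> s"
    proof (cases "u = 0")
      case True then show ?thesis unfolding s_eq by simp
    next
      case False then show ?thesis unfolding s_eq using Gpd by (simp add: less_imp_le)
    qed
    have qCu: "(transpose C *v u) \<bullet> (\<Sigma> *v (transpose C *v u)) \<le> s"
      using Gq[of u] s_eq Vqnn[of u] by linarith
    have "s\<^sup>2 \<le> (w \<bullet> (\<Sigma> *v w)) * ((transpose C *v u) \<bullet> (\<Sigma> *v (transpose C *v u)))"
      unfolding s_def by (rule psd_cs[OF \<Sigma>sym \<Sigma>psd])
    also have "\<dots> \<le> (w \<bullet> (\<Sigma> *v w)) * s" by (rule mult_left_mono[OF qCu \<Sigma>psd])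
    finally have ss: "s * s \<le> (w \<bullet> (\<Sigma> *v w)) * s" by (simp add: power2_eq_square)
    have "s \<le> w \<bullet> (\<Sigma> *v w)"
    proof (cases "s = 0")
      case True then show ?thesis using \<Sigma>psd by simp
    next
      case False then have "s > 0" using s_nn by simp
      then show ?thesis using ss by (simp add: mult_le_cancel_right)
    qed
    then show ?thesis using ric by linarith
  qed
  have \<Sigma>pd: "0 < x \<bullet> (\<Sigma> *v x)" if "x \<noteq> 0" for x using SW[of x] Wpos[OF that] by linarith
  have \<Sigma>inv: "invertible \<Sigma>" by (rule pd_invertible[OF \<Sigma>pd])
  define P where "P = matrix_inv \<Sigma>"
  have Psym: "transpose P = P" unfolding P_def by (rule inv_sym[OF \<Sigma>sym \<Sigma>inv])
  have Ppsd: "0 \<le> z \<bullet> (P *v z)" for z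
  proof -
    have "\<Sigma> *v (P *v z) = z" unfolding P_def by (rule inv_mv(1)[OF \<Sigma>inv])
    then have "z \<bullet> (P *v z) = (P *v z) \<bullet> (\<Sigma> *v (P *v z))" by (simp add: inner_commute)
    then show ?thesis using \<Sigma>psd by simp
  qed
  define M where "M = D + P"
  have Mgoal: "transpose C ** matrix_inv V ** C + matrix_inv \<Sigma> = M" unfolding M_def D_def P_def ..
  have Msym: "transpose M = M" unfolding M_def tadd Psym Ddg dg_transpose ..
  have Mq: "x \<bullet> (M *v x) = x \<bullet> (D *v x) + x \<bullet> (P *v x)" for x
    unfolding M_def by (simp only: matrix_vector_mult_add_rdistrib inner_add_right)
  have Mpd: "0 < x \<bullet> (M *v x)" if "x \<noteq> 0" for x
    using Mq[of x] Ppsd[of x] Dq[of x] pos_weighted_sum[where f=d, OF dpos that] by linarith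
  have Minv: "invertible M" by (rule pd_invertible[OF Mpd])
  have Mpsd: "0 \<le> x \<bullet> (M *v x)" for x using Mpd[of x] by (cases "x = 0") auto
  define lam where "lam = min_eig W"
  have lam: "lam > 0" "\<And>x. lam * (x \<bullet> x) \<le> x \<bullet> (W *v x)"
    using min_eig_prop[OF W_pd] unfolding lam_def by auto
  have tr: "trace (matrix_inv M) = (\<Sum>i\<in>UNIV. matrix_inv M $ i $ i)" by (simp add: trace_def)
  have up_i: "matrix_inv M $ i $ i \<le> 1 / d l" for i
  proof -
    have "matrix_inv M $ i $ i \<le> 1 / d i"
    proof (rule inv_diag_upper[OF M_def Minv Ppsd _ dpos])
      fix y :: "real^'n"
      show "d i * (y $ i)\<^sup>2 \<le> y \<bullet> (D *v y)" unfolding Dq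
        by (rule single_le_weighted_sum) (simp add: less_imp_le[OF dpos])
    qed
    also have "1 / d i \<le> 1 / d l" using l_argmin[of i] dpos[of l] unfolding d_eq[symmetric]
      by (simp add: frac_le)
    finally show ?thesis .
  qed
  have "trace (matrix_inv M) \<le> ?n * (1 / d l)"
    unfolding tr using sum_bounded_above[of UNIV "\<lambda>i. matrix_inv M $ i $ i" "1 / d l"] up_i by simp
  moreover have "?n * (1 / d l) \<le> B_u"
  proof -
    define i0 where "i0 = owner l"
    define K where "K = Kfun (\<delta> i0)"
    define \<eta>4 where "\<eta>4 = sqrt (B_u * (C $ l $ l)\<^sup>2 / (real CARD('n) * (\<Delta> i0)\<^sup>2))"
    have e4: "\<eta>4 > 0" unfolding \<eta>4_def by (rule \<eta>4_pos)
    have rad: "B_u * (C $ l $ l)\<^sup>2 / (real CARD('n) * (\<Delta> i0)\<^sup>2) > 0" using e4 unfolding \<eta>4_def by simp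
    have lb: "1/8 * ((1 + sqrt (36 * \<eta>4 + 1)) / \<eta>4)\<^sup>2 \<le> \<epsilon> i0"
      using \<epsilon>_bounds[of i0] unfolding Let_def \<eta>4_def by simp
    have "K + sqrt (K\<^sup>2 + 2 * \<epsilon> i0) \<le> 2 * \<epsilon> i0 * \<eta>4"
      by (rule SL1[OF e4 _ \<epsilon>_pos lb]) (use Kb[of i0] in \<open>simp add: K_def\<close>)
    then have "\<sigma> i0 \<le> \<Delta> i0 / (2 * \<epsilon> i0) * (2 * \<epsilon> i0 * \<eta>4)"
      unfolding \<sigma>_def K_def[symmetric] using \<Delta>_pos[of i0] \<epsilon>_pos[of i0]
      by (intro mult_left_mono) auto
    also have "\<dots> = \<Delta> i0 * \<eta>4" using \<epsilon>_pos[of i0] by simp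
    finally have s1: "\<sigma> i0 \<le> \<Delta> i0 * \<eta>4" .
    then have "(\<sigma> i0)\<^sup>2 \<le> (\<Delta> i0 * \<eta>4)\<^sup>2" using \<sigma>pos[of i0] by (intro power_mono) auto
    also have "\<dots> = (\<Delta> i0)\<^sup>2 * (B_u * (C $ l $ l)\<^sup>2 / (real CARD('n) * (\<Delta> i0)\<^sup>2))"
      unfolding \<eta>4_def power_mult_distrib using rad by simp
    also have "\<dots> = B_u * (c l)\<^sup>2 / ?n" using \<Delta>_pos[of i0] unfolding c_def by (simp add: field_simps)
    finally have "v l \<le> B_u * (c l)\<^sup>2 / ?n" unfolding v_def i0_def .
    then have "?n * v l \<le> B_u * (c l)\<^sup>2" using npos by (simp add: field_simps)
    then show ?thesis unfolding d_def using cpos[of l] vpos[of l] by (simp add: field_simps)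
  qed
  ultimately have upper: "trace (matrix_inv M) \<le> B_u" by linarith
  have Mii: "M $ i $ i = d i + P $ i $ i" for i unfolding M_def Ddg dg_def by simp
  have Miipos: "M $ i $ i > 0" for i
  proof -
    have "axis i (1::real) \<noteq> 0" by (simp add: axis_eq_0_iff)
    then show ?thesis using Mpd diag_q[of i M] by metis
  qed
  have Pii: "P $ i $ i \<le> 1 / lam" for i unfolding P_def
  proof (rule inv_diag_eig[OF \<Sigma>inv _ lam(1)])
    fix x show "lam * (x \<bullet> x) \<le> x \<bullet> (\<Sigma> *v x)" using lam(2)[of x] SW[of x] by linarith
  qed
  have lo_i: "1 / (d u + 1 / lam) \<le> matrix_inv M $ i $ i" for i
  proof -
    have "d i \<le> d u" using u_argmax[of i] unfolding d_eq[symmetric] .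
    then have "M $ i $ i \<le> d u + 1 / lam" using Mii[of i] Pii[of i] by linarith
    then have "1 / (d u + 1 / lam) \<le> 1 / M $ i $ i" using Miipos[of i] by (simp add: frac_le)
    also have "\<dots> \<le> matrix_inv M $ i $ i" by (rule inv_diag_lower[OF Msym Minv Mpsd Miipos])
    finally show ?thesis .
  qed
  have "?n * (1 / (d u + 1 / lam)) \<le> trace (matrix_inv M)"
    unfolding tr using sum_bounded_below[of UNIV "1 / (d u + 1 / lam)" "\<lambda>i. matrix_inv M $ i $ i"] lo_i by simp
  moreover have "B_l \<le> ?n * (1 / (d u + 1 / lam))"
  proof -
    define i1 where "i1 = owner u"
    define K where "K = Kfun (\<delta> i1)"
    define den where "den = real CARD('n) - B_l / lam"
    define Rr where "Rr = B_l * (C $ u $ u)\<^sup>2 / ((\<Delta> i1)\<^sup>2 * den)"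
    define \<eta>3 where "\<eta>3 = sqrt Rr"
    have e3: "\<eta>3 > 0" unfolding \<eta>3_def Rr_def den_def lam_def by (rule \<eta>3_pos)
    have Rpos: "Rr > 0" using e3 unfolding \<eta>3_def by simp
    have ub: "\<epsilon> i1 \<le> 1 / \<eta>3"
      using \<epsilon>_bounds[of i1] unfolding Let_def \<eta>3_def Rr_def den_def lam_def by simp
    have cu: "(C $ u $ u)\<^sup>2 > 0" using cpos[of u] unfolding c_def by simp
    have "B_l / den > 0"
    proof -
      have "den \<noteq> 0" using Rpos unfolding Rr_def by auto
      then have "B_l / den = Rr * ((\<Delta> i1)\<^sup>2 / (C $ u $ u)\<^sup>2)" unfolding Rr_def
        using cu \<Delta>_pos[of i1] by (simp add: field_simps)
      moreover have "(\<Delta> i1)\<^sup>2 / (C $ u $ u)\<^sup>2 > 0" using cu \<Delta>_pos[of i1] by simp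
      ultimately show ?thesis using Rpos by (metis mult_pos_pos)
    qed
    then have Bd: "B_l > 0 \<and> den > 0"
    proof -
      assume q: "B_l / den > 0"
      { assume "B_l < 0" "den < 0"
        then have "- B_l / lam > 0" using lam(1) by (simp add: divide_neg_pos)
        then have "den > 0" unfolding den_def using npos by simp
        then have False using \<open>den < 0\<close> by simp }
      then show ?thesis using q by (auto simp: zero_less_divide_iff)
    qed
    have "2 \<le> K + sqrt (K\<^sup>2 + 2 * \<epsilon> i1)" unfolding K_def by (rule SL2) (use Kb[of i1] \<epsilon>_pos in auto)
    then have "\<Delta> i1 / (2 * \<epsilon> i1) * 2 \<le> \<sigma> i1"
      unfolding \<sigma>_def K_def[symmetric] using \<Delta>_pos[of i1] \<epsilon>_pos[of i1]
      by (intro mult_left_mono) auto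
    moreover have "\<Delta> i1 / (2 * \<epsilon> i1) * 2 = \<Delta> i1 * (1 / \<epsilon> i1)" using \<epsilon>_pos[of i1] by simp
    moreover have "\<eta>3 \<le> 1 / \<epsilon> i1" using ub e3 \<epsilon>_pos[of i1] by (simp add: field_simps)
    ultimately have "\<Delta> i1 * \<eta>3 \<le> \<sigma> i1" using \<Delta>_pos[of i1]
      by (metis mult_left_mono less_imp_le order_trans)
    then have "(\<Delta> i1 * \<eta>3)\<^sup>2 \<le> (\<sigma> i1)\<^sup>2" using \<Delta>_pos[of i1] e3 by (intro power_mono) auto
    moreover have "(\<Delta> i1 * \<eta>3)\<^sup>2 = B_l * (c u)\<^sup>2 / den"
      unfolding power_mult_distrib \<eta>3_def using Rpos \<Delta>_pos[of i1] unfolding Rr_def c_def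
      by (simp add: field_simps)
    ultimately have vu: "B_l * (c u)\<^sup>2 / den \<le> v u" unfolding v_def i1_def by simp
    have "B_l * d u \<le> den"
    proof -
      have "B_l * (c u)\<^sup>2 \<le> v u * den" using vu Bd by (simp add: field_simps)
      then show ?thesis unfolding d_def using vpos[of u] by (simp add: field_simps)
    qed
    then have "B_l * (d u + 1 / lam) \<le> ?n" unfolding den_def by (simp add: algebra_simps)
    moreover have "d u + 1 / lam > 0"
    proof -
      have "1 / lam > 0" using lam(1) by simp
      then show ?thesis using dpos[of u] by linarith
    qed
    ultimately show ?thesis by (simp add: field_simps)
  qed
  ultimately have lower: "B_l \<le> trace (matrix_inv M)" by linarith
  show ?thesis unfolding Mgoal using upper lower by simp
qed

end
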